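(* Let $A$ be a finite alphabet, $\mathbf{w}$ an infinite word over $A$ (not necessarily LSP) and $f$ a bLSP morphism on $A$, with $\alpha={\rm first}(f)$. Suppose a finite word $u$ is an $(a,b,c,\beta,\gamma)$-fragility of $f(\mathbf{w})$. (i) If $u=\varepsilon$, then $a={\rm first}(f)$ and $\beta b,\gamma c\in{\rm Fact}(f({\rm alph}(\mathbf{w})))$. (ii) If $u\neq\varepsilon$, then there exist letters $a',b',c'\in{\rm alph}(\mathbf{w})$ and an $(a',b',c',\beta,\gamma)$-fragility $v$ of $\mathbf{w}$ such that $|v|<|u|$, $f(v)$ is a proper prefix of $u$, and the words $ua$, $\beta ub$, $\gamma uc$ are respectively prefixes of $f(va')\alpha$, $\beta f(vb')\alpha$, $\gamma f(vc')\alpha$.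
   Context: A bLSP morphism on $A$ is an endomorphism $f$ of $A^*$ such that there is a letter $\alpha$ with $f(\alpha)=\alpha$ and, for every letter $\beta\neq\alpha$, there is a letter $\gamma$ with $f(\beta)=f(\gamma)\beta$; this $\alpha$ is unique and denoted ${\rm first}(f)$. For pairwise distinct letters $a,b,c$ and distinct letters $\beta\neq\gamma$, a finite word $u$ is an $(a,b,c,\beta,\gamma)$-fragility of an infinite word $\mathbf{x}$ if $ua$ is a prefix of $\mathbf{x}$ and $\beta ub$, $\gamma uc$ are factors of $\mathbf{x}$. ${\rm alph}(\mathbf{w})$ is the set of letters occurring in $\mathbf{w}$; for a set $X$ of words, ${\rm Fact}(X)$ is the set of factors of words of $X$; $\varepsilon$ is the empty word. *)

theory Defs
  imports Main "HOL-Library.Sublist"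
begin

text \<open>Finite words are lists, infinite words are functions nat => 'a.
A morphism of A* is determined by the images of the letters, f :: 'a => 'a list.\<close>

definition morph :: "('a \<Rightarrow> 'a list) \<Rightarrow> 'a list \<Rightarrow> 'a list" where
  "morph f u = concat (map f u)"

definition pref :: "nat \<Rightarrow> (nat \<Rightarrow> 'a) \<Rightarrow> 'a list" where
  "pref n x = map x [0..<n]"

text \<open>Image of an infinite word under a nonerasing morphism: the n-th letter of
f(x) is the n-th letter of f applied to the prefix of length n+1 of x
(this prefix has an image of length at least n+1 when f is nonerasing).\<close>
definition omorph :: "('a \<Rightarrow> 'a list) \<Rightarrow> (nat \<Rightarrow> 'a) \<Rightarrow> nat \<Rightarrow> 'a" where
  "omorph f x n = morph f (pref (Suc n) x) ! n"

definition is_endo :: "'a set \<Rightarrow> ('a \<Rightarrow> 'a list) \<Rightarrow> bool" where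
  "is_endo A f \<longleftrightarrow> (\<forall>a\<in>A. set (f a) \<subseteq> A)"

definition bLSP :: "'a set \<Rightarrow> ('a \<Rightarrow> 'a list) \<Rightarrow> bool" where
  "bLSP A f \<longleftrightarrow> is_endo A f \<and>
     (\<exists>\<alpha>\<in>A. f \<alpha> = [\<alpha>] \<and> (\<forall>\<beta>\<in>A. \<beta> \<noteq> \<alpha> \<longrightarrow> (\<exists>\<gamma>\<in>A. f \<beta> = f \<gamma> @ [\<beta>])))"

definition first :: "'a set \<Rightarrow> ('a \<Rightarrow> 'a list) \<Rightarrow> 'a" where
  "first A f = (THE \<alpha>. \<alpha> \<in> A \<and> f \<alpha> = [\<alpha>] \<and>
                  (\<forall>\<beta>\<in>A. \<beta> \<noteq> \<alpha> \<longrightarrow> (\<exists>\<gamma>\<in>A. f \<beta> = f \<gamma> @ [\<beta>])))"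

definition is_prefix_inf :: "'a list \<Rightarrow> (nat \<Rightarrow> 'a) \<Rightarrow> bool" where
  "is_prefix_inf u x \<longleftrightarrow> (\<forall>i<length u. u ! i = x i)"

definition is_factor_inf :: "'a list \<Rightarrow> (nat \<Rightarrow> 'a) \<Rightarrow> bool" where
  "is_factor_inf u x \<longleftrightarrow> (\<exists>k. \<forall>i<length u. u ! i = x (k + i))"

definition alph :: "(nat \<Rightarrow> 'a) \<Rightarrow> 'a set" where
  "alph x = range x"

definition Fact :: "'a list set \<Rightarrow> 'a list set" where
  "Fact X = {v. \<exists>x\<in>X. sublist v x}"

definition fragility :: "'a list \<Rightarrow> 'a \<Rightarrow> 'a \<Rightarrow> 'a \<Rightarrow> 'a \<Rightarrow> 'a \<Rightarrow> (nat \<Rightarrow> 'a) \<Rightarrow> bool" where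
  "fragility u a b c \<beta> \<gamma> x \<longleftrightarrow>
     a \<noteq> b \<and> a \<noteq> c \<and> b \<noteq> c \<and> \<beta> \<noteq> \<gamma> \<and>
     is_prefix_inf (u @ [a]) x \<and> is_factor_inf (\<beta> # u @ [b]) x \<and> is_factor_inf (\<gamma> # u @ [c]) x"

end

theory Submission
  imports Defs
begin


lemma morph_Nil[simp]: "morph f [] = []" by (simp add: morph_def)
lemma morph_Cons[simp]: "morph f (x#xs) = f x @ morph f xs" by (simp add: morph_def)
lemma morph_append[simp]: "morph f (xs@ys) = morph f xs @ morph f ys" by (simp add: morph_def)

locale blsp =
  fixes A :: "'a set" and f :: "'a \<Rightarrow> 'a list" and \<alpha> :: 'a
  assumes aA: "\<alpha> \<in> A" and fa: "f \<alpha> = [\<alpha>]"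
    and step: "\<And>\<beta>. \<beta> \<in> A \<Longrightarrow> \<beta> \<noteq> \<alpha> \<Longrightarrow> \<exists>\<gamma>\<in>A. f \<beta> = f \<gamma> @ [\<beta>]"
begin

lemma core: "x \<in> A \<Longrightarrow> f x \<noteq> [] \<and> last (f x) = x \<and>
   (\<forall>k<length (f x). f x ! k \<in> A \<and> f (f x ! k) = take (Suc k) (f x))"
proof (induction "length (f x)" arbitrary: x rule: less_induct)
  case less
  show ?case
  proof (cases "x = \<alpha>")
    case True then show ?thesis using fa aA by auto
  next
    case False
    then obtain g where g: "g \<in> A" "f x = f g @ [x]" using step less.prems by blast
    have IH: "f g \<noteq> [] \<and> last (f g) = g \<and>
      (\<forall>k<length (f g). f g ! k \<in> A \<and> f (f g ! k) = take (Suc k) (f g))"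
      using less.hyps[of g] g by simp
    have "\<forall>k<length (f x). f x ! k \<in> A \<and> f (f x ! k) = take (Suc k) (f x)"
    proof (intro allI impI)
      fix k assume k: "k < length (f x)"
      show "f x ! k \<in> A \<and> f (f x ! k) = take (Suc k) (f x)"
      proof (cases "k < length (f g)")
        case True then show ?thesis using IH g by (simp add: nth_append)
      next
        case False
        then have "k = length (f g)" using k g by simp
        then show ?thesis using g less.prems by simp
      qed
    qed
    then show ?thesis using g by simp
  qed
qed

lemma ne: "x \<in> A \<Longrightarrow> f x \<noteq> []" using core by blast
lemma lastf: "x \<in> A \<Longrightarrow> last (f x) = x" using core by blast
lemma injf: "x \<in> A \<Longrightarrow> y \<in> A \<Longrightarrow> f x = f y \<Longrightarrow> x = y" using lastf by metis

lemma hd0: assumes "x \<in> A" shows "f x ! 0 = \<alpha>"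
proof -
  let ?y = "f x ! 0"
  have y: "?y \<in> A" "f ?y = take 1 (f x)" using core[OF assms] ne[OF assms] by auto
  then have fy: "f ?y = [?y]" using ne[OF assms] by (cases "f x") auto
  show ?thesis
  proof (rule ccontr)
    assume "?y \<noteq> \<alpha>"
    then obtain g where "g \<in> A" "f ?y = f g @ [?y]" using step y by blast
    then show False using fy ne by auto
  qed
qed

lemma noalpha: assumes "x \<in> A" "k < length (f x)" "f x ! k = \<alpha>" shows "k = 0"
proof -
  have c: "\<forall>k<length (f x). f x ! k \<in> A \<and> f (f x ! k) = take (Suc k) (f x)"
    using core[OF assms(1)] by (rule conjunct2[OF conjunct2])
  have "f (f x ! k) = take (Suc k) (f x)" using c assms(2) by blast
  then have "take (Suc k) (f x) = [\<alpha>]" using assms(3) fa by simp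
  then have "length (take (Suc k) (f x)) = 1" by simp
  then show ?thesis using assms(2) by (simp add: min_def split: if_splits)
qed

lemma first_eq: assumes "bLSP A f" shows "first A f = \<alpha>"
  unfolding first_def
proof (rule the_equality)
  show "\<alpha> \<in> A \<and> f \<alpha> = [\<alpha>] \<and> (\<forall>\<beta>\<in>A. \<beta> \<noteq> \<alpha> \<longrightarrow> (\<exists>\<gamma>\<in>A. f \<beta> = f \<gamma> @ [\<beta>]))"
    using aA fa step by blast
next
  fix a assume H: "a \<in> A \<and> f a = [a] \<and> (\<forall>\<beta>\<in>A. \<beta> \<noteq> a \<longrightarrow> (\<exists>\<gamma>\<in>A. f \<beta> = f \<gamma> @ [\<beta>]))"
  show "a = \<alpha>"
  proof (rule ccontr)
    assume "a \<noteq> \<alpha>"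
    then obtain g where "g \<in> A" "f \<alpha> = f g @ [\<alpha>]" using H aA by metis
    then show False using fa ne by auto
  qed
qed

lemma len_morph: "set xs \<subseteq> A \<Longrightarrow> length xs \<le> length (morph f xs)"
proof (induction xs)
  case (Cons x xs) then show ?case using ne[of x] by (cases "f x") auto
qed simp

lemma morph0: "set ys \<subseteq> A \<Longrightarrow> ys \<noteq> [] \<Longrightarrow> morph f ys \<noteq> [] \<and> morph f ys ! 0 = \<alpha>"
  by (cases ys) (auto simp: nth_append hd0 ne)

lemma pref_alpha: "z \<noteq> [] \<Longrightarrow> prefix z (f x) \<Longrightarrow> x \<in> A \<Longrightarrow> z ! 0 = \<alpha>"
  by (metis hd0 length_greater_0_conv prefix_def nth_append)

lemma pref_noalpha: "prefix z (f x) \<Longrightarrow> x \<in> A \<Longrightarrow> 0 < k \<Longrightarrow> k < length z \<Longrightarrow> z ! k \<noteq> \<alpha>"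
  by (metis noalpha prefix_def nth_append length_append trans_less_add1 not_less0 less_irrefl)

lemma seg0: "set xs \<subseteq> A \<Longrightarrow> z \<noteq> [] \<Longrightarrow> prefix z (f x) \<Longrightarrow> x \<in> A \<Longrightarrow> (morph f xs @ z) ! 0 = \<alpha>"
  by (cases xs) (auto simp: nth_append hd0 ne pref_alpha)

end

context blsp begin

lemma segL: "set ys \<subseteq> A \<Longrightarrow> 0 < n \<Longrightarrow> n < length (morph f ys) \<Longrightarrow>
  \<exists>m z. m < length ys \<and> z \<noteq> [] \<and> prefix z (f (ys!m)) \<and>
     take n (morph f ys) = morph f (take m ys) @ z \<and>
     (if length z < length (f (ys!m)) then morph f ys ! n = f (ys!m) ! length z
      else z = f (ys!m) \<and> morph f ys ! n = \<alpha>)"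
proof (induction ys arbitrary: n)
  case Nil then show ?case by simp
next
  case (Cons y ys)
  show ?case
  proof (cases "n < length (f y)")
    case True
    then show ?thesis
      by (intro exI[of _ 0] exI[of _ "take n (f y)"]) (use Cons.prems in \<open>auto simp: nth_append min_def take_is_prefix\<close>)
  next
    case False
    show ?thesis
    proof (cases "n = length (f y)")
      case True
      then have "ys \<noteq> []" using Cons.prems by auto
      then have "morph f ys ! 0 = \<alpha>" using morph0 Cons.prems by auto
      then show ?thesis
        by (intro exI[of _ 0] exI[of _ "f y"]) (use Cons.prems True ne in \<open>auto simp: nth_append\<close>)
    next
      case False2: False
      then have n': "0 < n - length (f y)" "n - length (f y) < length (morph f ys)"
        using False Cons.prems by auto
      obtain m z where mz: "m < length ys" "z \<noteq> []" "prefix z (f (ys!m))"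
        "take (n - length (f y)) (morph f ys) = morph f (take m ys) @ z"
        "(if length z < length (f (ys!m)) then morph f ys ! (n - length (f y)) = f (ys!m) ! length z
          else z = f (ys!m) \<and> morph f ys ! (n - length (f y)) = \<alpha>)"
        using Cons.IH[OF _ n'] Cons.prems by auto
      show ?thesis
        apply (intro exI[of _ "Suc m"] exI[of _ z])
        using mz False False2 by (auto simp: nth_append)
    qed
  qed
qed

lemma alphaL: "set ys \<subseteq> A \<Longrightarrow> i < length (morph f ys) \<Longrightarrow> morph f ys ! i = \<alpha> \<Longrightarrow>
  \<exists>j<length ys. i = length (morph f (take j ys)) \<and> (0 < j \<longrightarrow> 0 < i \<and> morph f ys ! (i - 1) = ys ! (j - 1))"
proof (induction ys arbitrary: i)
  case Nil then show ?case by simp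
next
  case (Cons y ys)
  show ?case
  proof (cases "i < length (f y)")
    case True
    then have "i = 0" using noalpha[of y i] Cons.prems by (auto simp: nth_append)
    then show ?thesis by (intro exI[of _ 0]) auto
  next
    case False
    then have i': "i - length (f y) < length (morph f ys)" "morph f ys ! (i - length (f y)) = \<alpha>"
      using Cons.prems by (auto simp: nth_append)
    obtain j where j: "j < length ys" "i - length (f y) = length (morph f (take j ys))"
      "0 < j \<longrightarrow> 0 < i - length (f y) \<and> morph f ys ! (i - length (f y) - 1) = ys ! (j - 1)"
      using Cons.IH[OF _ i'] Cons.prems by (meson set_subset_Cons subset_trans)
    have fy: "f y \<noteq> []" "last (f y) = y" using ne lastf Cons.prems by auto
    have "0 < i \<and> morph f (y#ys) ! (i - 1) = (y#ys) ! (Suc j - 1)"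
    proof (cases j)
      case 0
      then have "i = length (f y)" using j False by simp
      then show ?thesis using fy 0 by (auto simp: nth_append last_conv_nth)
    next
      case (Suc j0)
      then have p: "0 < i - length (f y)" "morph f ys ! (i - length (f y) - 1) = ys ! j0" using j by auto
      then have "i - 1 \<ge> length (f y)" "i - 1 - length (f y) = i - length (f y) - 1" by auto
      then have "morph f (y#ys) ! (i - 1) = morph f ys ! (i - length (f y) - 1)"
        by (simp add: nth_append)
      then show ?thesis using p Suc by simp
    qed
    then show ?thesis using j False by (intro exI[of _ "Suc j"]) auto
  qed
qed

lemma sublist_nth2: "Suc i < length x \<Longrightarrow> sublist [x!i, x!Suc i] x"
proof -
  assume h: "Suc i < length x"
  have "x = take i x @ [x!i, x!Suc i] @ drop (Suc (Suc i)) x"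
    using h by (metis Cons_nth_drop_Suc Suc_lessD append_Cons append_Nil append_take_drop_id)
  then show ?thesis by (metis sublist_appendI)
qed

lemma factL: "set ys \<subseteq> A \<Longrightarrow> Suc i < length (morph f ys) \<Longrightarrow> morph f ys ! Suc i \<noteq> \<alpha> \<Longrightarrow>
  \<exists>y\<in>set ys. sublist [morph f ys ! i, morph f ys ! Suc i] (f y)"
proof (induction ys arbitrary: i)
  case Nil then show ?case by simp
next
  case (Cons y ys)
  show ?case
  proof (cases "Suc i < length (f y)")
    case True
    then show ?thesis using sublist_nth2[OF True] by (auto simp: nth_append)
  next
    case False
    show ?thesis
    proof (cases "Suc i = length (f y)")
      case True
      then have "ys \<noteq> []" using Cons.prems by auto
      then have "morph f ys ! 0 = \<alpha>" using morph0 Cons.prems by auto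
      then show ?thesis using Cons.prems True by (auto simp: nth_append)
    next
      case False2: False
      then have "Suc (i - length (f y)) = Suc i - length (f y)" using False by auto
      then have i': "Suc (i - length (f y)) < length (morph f ys)" "morph f ys ! Suc (i - length (f y)) \<noteq> \<alpha>"
        using Cons.prems False False2 by (auto simp: nth_append)
      then obtain z where "z \<in> set ys" "sublist [morph f ys ! (i - length (f y)), morph f ys ! Suc (i - length (f y))] (f z)"
        using Cons.IH[OF _ i'] Cons.prems by auto
      moreover have "morph f (y#ys) ! i = morph f ys ! (i - length (f y))"
        "morph f (y#ys) ! Suc i = morph f ys ! Suc (i - length (f y))"
        using False False2 \<open>Suc (i - length (f y)) = Suc i - length (f y)\<close> by (auto simp: nth_append)
      ultimately show ?thesis by auto
    qed
  qed
qed

lemma uniq: "set xs \<subseteq> A \<Longrightarrow> set ys \<subseteq> A \<Longrightarrow> x \<in> A \<Longrightarrow> y \<in> A \<Longrightarrow> z \<noteq> [] \<Longrightarrow> z' \<noteq> [] \<Longrightarrow>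
  prefix z (f x) \<Longrightarrow> prefix z' (f y) \<Longrightarrow> morph f xs @ z = morph f ys @ z' \<Longrightarrow> xs = ys \<and> z = z'"
proof (induction xs arbitrary: ys)
  case Nil
  show ?case
  proof (cases ys)
    case Nil then show ?thesis using Nil.prems by simp
  next
    case (Cons y0 ys')
    let ?l = "length (f y0)"
    have l0: "0 < ?l" using ne Cons Nil.prems by auto
    have e: "z = f y0 @ (morph f ys' @ z')" using Nil.prems Cons by simp
    then have ll: "?l < length z" using Nil.prems by simp
    have "z ! ?l = (morph f ys' @ z') ! 0" using e by (simp add: nth_append)
    also have "\<dots> = \<alpha>" using seg0 Nil.prems Cons by auto
    finally show ?thesis using pref_noalpha[OF Nil.prems(7,3) l0 ll] by simp
  qed
next
  case (Cons x0 xs')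
  show ?case
  proof (cases ys)
    case Nil
    let ?l = "length (f x0)"
    have l0: "0 < ?l" using ne Cons by auto
    have e: "z' = f x0 @ (morph f xs' @ z)" using Cons.prems Nil by simp
    then have ll: "?l < length z'" using Cons.prems by simp
    have "z' ! ?l = (morph f xs' @ z) ! 0" using e by (simp add: nth_append)
    also have "\<dots> = \<alpha>" using seg0 Cons.prems by auto
    finally show ?thesis using pref_noalpha[OF Cons.prems(8,4) l0 ll] by simp
  next
    case (Cons y0 ys')
    note C = Cons
    have x0: "x0 \<in> A" and y0: "y0 \<in> A" using Cons.prems C by auto
    have R: "(morph f xs' @ z) ! 0 = \<alpha>" "(morph f ys' @ z') ! 0 = \<alpha>"
      using seg0 Cons.prems C by auto
    have Rne: "morph f xs' @ z \<noteq> []" "morph f ys' @ z' \<noteq> []" using Cons.prems by auto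
    have E: "f x0 @ (morph f xs' @ z) = f y0 @ (morph f ys' @ z')" using Cons.prems C by simp
    have len: "length (f x0) = length (f y0)"
    proof (rule ccontr)
      assume "length (f x0) \<noteq> length (f y0)"
      then consider "length (f x0) < length (f y0)" | "length (f y0) < length (f x0)" by linarith
      then show False
      proof cases
        case 1
        have "(f x0 @ (morph f xs' @ z)) ! length (f x0) = \<alpha>" using R by (simp add: nth_append)
        moreover have "(f y0 @ (morph f ys' @ z')) ! length (f x0) = f y0 ! length (f x0)"
          using 1 by (simp add: nth_append)
        moreover have "f y0 ! length (f x0) \<noteq> \<alpha>"
          using pref_noalpha[of "f y0" y0 "length (f x0)"] 1 ne[OF x0] y0 by simp
        ultimately show False using E by simp
      next
        case 2
        have "(f y0 @ (morph f ys' @ z')) ! length (f y0) = \<alpha>" using R by (simp add: nth_append)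
        moreover have "(f x0 @ (morph f xs' @ z)) ! length (f y0) = f x0 ! length (f y0)"
          using 2 by (simp add: nth_append)
        moreover have "f x0 ! length (f y0) \<noteq> \<alpha>"
          using pref_noalpha[of "f x0" x0 "length (f y0)"] 2 ne[OF y0] x0 by simp
        ultimately show False using E by simp
      qed
    qed
    then have "f x0 = f y0" "morph f xs' @ z = morph f ys' @ z'" using E by auto
    have "xs' = ys' \<and> z = z'"
      apply (rule Cons.IH)
      using Cons.prems C \<open>morph f xs' @ z = morph f ys' @ z'\<close> by auto
    moreover have "x0 = y0" using injf x0 y0 \<open>f x0 = f y0\<close> by blast
    ultimately show ?thesis using C by simp
  qed
qed

end


lemma pref_len[simp]: "length (pref n w) = n" by (simp add: pref_def)
lemma pref_nth[simp]: "i < n \<Longrightarrow> pref n w ! i = w i" by (simp add: pref_def)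
lemma pref_app: assumes "a \<le> b" shows "pref b w = pref a w @ map w [a..<b]"
proof -
  obtain k where "b = a + k" using assms le_Suc_ex by blast
  then show ?thesis by (simp add: pref_def upt_add_eq_append[of 0 a k])
qed
lemma take_pref: "j \<le> N \<Longrightarrow> take j (pref N w) = pref j w"
  by (simp add: pref_app[of j N])
lemma drop_pref: "j \<le> N \<Longrightarrow> drop j (pref N w) = map w [j..<N]"
  by (simp add: pref_app[of j N])
lemma fac_map: "is_factor_inf (map w [a..<a+l]) w"
  unfolding is_factor_inf_def by (intro exI[of _ a]) simp
lemma set_pref: "set (pref N w) = w ` {0..<N}" by (simp add: pref_def)

context blsp begin

lemma set_pref_A: "\<forall>i. w i \<in> A \<Longrightarrow> set (pref N w) \<subseteq> A"
  by (auto simp: set_pref)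

lemma lenM: "\<forall>i. w i \<in> A \<Longrightarrow> N \<le> length (morph f (pref N w))"
  using len_morph[OF set_pref_A] by (metis pref_len)

lemma W_nth: assumes wA: "\<forall>i. w i \<in> A" and i: "i < length (morph f (pref N w))"
  shows "omorph f w i = morph f (pref N w) ! i"
proof -
  have l: "i < length (morph f (pref (Suc i) w))" using lenM[OF wA, of "Suc i"] by simp
  show ?thesis
  proof (cases "Suc i \<le> N")
    case True
    then show ?thesis using l by (simp add: omorph_def pref_app[OF True] nth_append)
  next
    case False
    then have "N \<le> Suc i" by simp
    then show ?thesis using i by (simp add: omorph_def pref_app[of N "Suc i"] nth_append)
  qed
qed

lemma PP: "prefix z (f x) \<Longrightarrow> (if length z < length (f x) then a = f x ! length z else z = f x \<and> a = \<alpha>)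
  \<Longrightarrow> prefix (z @ [a]) (f x @ [\<alpha>])"
proof (cases "length z < length (f x)")
  case True
  assume p: "prefix z (f x)" and h: "(if length z < length (f x) then a = f x ! length z else z = f x \<and> a = \<alpha>)"
  then have a: "a = f x ! length z" using True by simp
  have "z = take (length z) (f x)" using p by (metis append_eq_conv_conj prefix_def)
  then have "z @ [a] = take (Suc (length z)) (f x)" using a True by (simp add: take_Suc_conv_app_nth)
  then show ?thesis by (metis prefix_append take_is_prefix)
next
  case False
  assume "prefix z (f x)" and h: "(if length z < length (f x) then a = f x ! length z else z = f x \<and> a = \<alpha>)"
  then show ?thesis using False by simp
qed

lemma H1:
  assumes wA: "\<forall>i. w i \<in> A" and pf: "is_prefix_inf (u@[a]) (omorph f w)" and une: "u \<noteq> []"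
  shows "\<exists>v z a'. u = morph f v @ z \<and> z \<noteq> [] \<and> prefix z (f a') \<and> a' \<in> range w \<and> set v \<subseteq> A \<and>
     is_prefix_inf (v@[a']) w \<and> (if length z < length (f a') then a = f a' ! length z else z = f a' \<and> a = \<alpha>)"
proof -
  define n where "n = length u"
  define M where "M = morph f (pref (Suc n) w)"
  have lM: "Suc n \<le> length M" using lenM[OF wA] M_def by blast
  have Wi: "\<And>i. i \<le> n \<Longrightarrow> (u@[a]) ! i = M ! i"
  proof -
    fix i assume "i \<le> n"
    then have "(u@[a]) ! i = omorph f w i" using pf n_def by (simp add: is_prefix_inf_def)
    also have "\<dots> = M ! i" using W_nth[OF wA] lM \<open>i \<le> n\<close> M_def by simp
    finally show "(u@[a]) ! i = M ! i" .
  qed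
  have uM: "u = take n M"
  proof (rule nth_equalityI)
    show "length u = length (take n M)" using lM n_def by simp
    fix i assume "i < length u"
    then show "u ! i = take n M ! i" using Wi[of i] n_def by (simp add: nth_append)
  qed
  have aM: "a = M ! n" using Wi[of n] n_def by simp
  have n0: "0 < n" using une n_def by simp
  obtain m z where mz: "m < Suc n" "z \<noteq> []" "prefix z (f (pref (Suc n) w ! m))"
     "take n M = morph f (take m (pref (Suc n) w)) @ z"
     "(if length z < length (f (pref (Suc n) w ! m)) then M ! n = f (pref (Suc n) w ! m) ! length z
      else z = f (pref (Suc n) w ! m) \<and> M ! n = \<alpha>)"
    using segL[OF set_pref_A[OF wA] n0, of "Suc n"] lM M_def by auto
  have e1: "pref (Suc n) w ! m = w m" using mz(1) by simp
  have e2: "take m (pref (Suc n) w) = pref m w" using mz(1) by (simp add: take_pref)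
  have c1: "u = morph f (pref m w) @ z" using mz(4) e2 uM by simp
  have c2: "prefix z (f (w m))" using mz(3) e1 by simp
  have c3: "is_prefix_inf (pref m w @ [w m]) w"
    by (auto simp: is_prefix_inf_def nth_append less_Suc_eq)
  have c4: "(if length z < length (f (w m)) then a = f (w m) ! length z else z = f (w m) \<and> a = \<alpha>)"
    using mz(5)[unfolded e1] aM by simp
  show ?thesis using c1 c2 c3 c4 mz(2) set_pref_A[OF wA, of m] by blast
qed


lemma H2:
  assumes wA: "\<forall>i. w i \<in> A" and fb: "is_factor_inf (\<beta>#u@[b]) (omorph f w)"
    and uv: "u = morph f v @ z" and zne: "z \<noteq> []" and zp: "prefix z (f y)" and yA: "y \<in> A"
    and vA: "set v \<subseteq> A"
  shows "\<exists>b'. b' \<in> range w \<and> is_factor_inf (\<beta>#v@[b']) w \<and> prefix z (f b') \<and>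
     (if length z < length (f b') then b = f b' ! length z else z = f b' \<and> b = \<alpha>)"
proof -
  define n where "n = length u"
  obtain k where k: "\<forall>i<length (\<beta>#u@[b]). (\<beta>#u@[b]) ! i = omorph f w (k + i)"
    using fb by (auto simp: is_factor_inf_def)
  define N where "N = k + n + 2"
  define P where "P = pref N w"
  define M where "M = morph f P"
  have PA: "set P \<subseteq> A" using set_pref_A[OF wA] P_def by simp
  have lM: "N \<le> length M" using lenM[OF wA] M_def P_def by blast
  have u0: "u ! 0 = \<alpha>" using seg0[OF vA zne zp yA] uv by simp
  have n0: "0 < n" using uv zne n_def by simp
  have Mk: "\<And>i. i < n + 2 \<Longrightarrow> M ! (k + i) = (\<beta>#u@[b]) ! i"
  proof -
    fix i assume i: "i < n + 2"
    then have "(\<beta>#u@[b]) ! i = omorph f w (k + i)" using k n_def by simp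
    also have "\<dots> = M ! (k + i)" using W_nth[OF wA, of "k+i" N] lM i N_def M_def P_def by simp
    finally show "M ! (k + i) = (\<beta>#u@[b]) ! i" by simp
  qed
  have Mk1a: "M ! (k + 1) = (\<beta>#u@[b]) ! 1" using Mk[of 1] by simp
  have Mk1b: "(\<beta>#u@[b]) ! 1 = u ! 0" using n0 n_def by (simp add: nth_append)
  have Mk1: "morph f P ! (k + 1) = \<alpha>" using Mk1a Mk1b u0 M_def by simp
  have kl: "k + 1 < length (morph f P)" using lM N_def M_def by simp
  obtain j where j: "j < length P" "k + 1 = length (morph f (take j P))"
    "0 < j \<longrightarrow> 0 < k + 1 \<and> morph f P ! (k + 1 - 1) = P ! (j - 1)"
    using alphaL[OF PA kl Mk1] by (elim exE conjE) (rule that; assumption)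
  have j0: "0 < j"
  proof (rule ccontr)
    assume "\<not> 0 < j"
    then have "j = 0" by simp
    then show False using j(2) by simp
  qed
  have jN: "j < N" using j(1) P_def by simp
  have Mk0: "M ! k = \<beta>" using Mk[of 0] by simp
  have Pj: "P ! (j - 1) = w (j - 1)" using jN unfolding P_def by simp
  have beta: "\<beta> = w (j - 1)" using j(3) j0 Mk0 Pj M_def by simp
  define ys where "ys = drop j P"
  have ysw: "ys = map w [j..<N]" unfolding ys_def P_def using jN by (simp add: drop_pref)
  have ysA: "set ys \<subseteq> A" using PA ys_def by (meson set_drop_subset subset_trans)
  have Msplit: "M = morph f (take j P) @ morph f ys" using M_def ys_def
    by (metis append_take_drop_id morph_append)
  have Mys: "\<And>i. M ! (k + 1 + i) = morph f ys ! i"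
  proof -
    fix i
    have "M ! (k + 1 + i) = (morph f (take j P) @ morph f ys) ! (length (morph f (take j P)) + i)"
      using Msplit j(2) by simp
    then show "M ! (k + 1 + i) = morph f ys ! i" by (simp only: nth_append_length_plus)
  qed
  have "length M = k + 1 + length (morph f ys)" using Msplit j(2) by simp
  then have lys: "n < length (morph f ys)" using lM N_def by simp
  have uys: "u = take n (morph f ys)"
  proof (rule nth_equalityI)
    show "length u = length (take n (morph f ys))" using lys n_def by simp
    fix i assume i: "i < length u"
    have "u ! i = (\<beta>#u@[b]) ! (Suc i)" using i by (simp add: nth_append)
    also have "\<dots> = M ! (k + 1 + i)" using Mk[of "Suc i"] i n_def by simp
    also have "\<dots> = morph f ys ! i" by (rule Mys)
    finally show "u ! i = take n (morph f ys) ! i" using i n_def by simp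
  qed
  have bys: "b = morph f ys ! n"
  proof -
    have "b = (\<beta>#u@[b]) ! (Suc n)" using n_def by simp
    also have "\<dots> = M ! (k + 1 + n)" using Mk[of "Suc n"] by simp
    finally show ?thesis using Mys by simp
  qed
  obtain m z2 where mz: "m < length ys" "z2 \<noteq> []" "prefix z2 (f (ys!m))"
     "take n (morph f ys) = morph f (take m ys) @ z2"
     "(if length z2 < length (f (ys!m)) then morph f ys ! n = f (ys!m) ! length z2
      else z2 = f (ys!m) \<and> morph f ys ! n = \<alpha>)"
    using segL[OF ysA n0 lys] by blast
  have ymA: "ys ! m \<in> A" using ysA mz(1) by auto
  have tA: "set (take m ys) \<subseteq> A" using ysA by (meson set_take_subset subset_trans)
  have vz: "v = take m ys \<and> z = z2"
    using uniq[OF vA tA yA ymA zne mz(2) zp mz(3)] uv uys mz(4) by simp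
  have mN: "j + m < N" using mz(1) ysw by simp
  have ym: "ys ! m = w (j + m)" using ysw mz(1) by simp
  have vw: "v = map w [j..<j+m]" using vz ysw mN by (simp add: take_map)
  have L: "\<beta> # v @ [w (j+m)] = map w [j-1..<(j-1)+(m+2)]"
  proof -
    obtain j1 where j1: "j = Suc j1" using j0 by (cases j) auto
    have "[j1..<Suc j1 + m + 1] = j1 # [Suc j1..<Suc j1 + m] @ [Suc j1 + m]"
      by (simp add: upt_conv_Cons)
    then show ?thesis using beta vw j1 by (simp add: add.commute)
  qed
  have fac: "is_factor_inf (\<beta> # v @ [w (j+m)]) w"
    unfolding L by (rule fac_map)
  show ?thesis
    using fac vz mz(3) mz(5) ym bys by (intro exI[of _ "w (j+m)"]) auto
qed

lemma H3:
  assumes wA: "\<forall>i. w i \<in> A" and fb: "is_factor_inf [\<beta>, b] (omorph f w)" and ba: "b \<noteq> \<alpha>"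
  shows "[\<beta>, b] \<in> Fact (f ` alph w)"
proof -
  obtain k where k: "\<forall>i<length [\<beta>, b]. [\<beta>, b] ! i = omorph f w (k + i)"
    using fb unfolding is_factor_inf_def by blast
  define P where "P = pref (k+2) w"
  define M where "M = morph f P"
  have PA: "set P \<subseteq> A" using set_pref_A[OF wA] P_def by simp
  have lM: "k + 2 \<le> length M" using lenM[OF wA] M_def P_def by blast
  have "\<beta> = omorph f w k" using k[rule_format, of 0] by simp
  then have b1: "\<beta> = M ! k" using W_nth[OF wA, of k "k+2"] lM M_def P_def by simp
  have "b = omorph f w (Suc k)" using k[rule_format, of 1] by simp
  then have b2: "b = M ! Suc k" using W_nth[OF wA, of "Suc k" "k+2"] lM M_def P_def by simp
  obtain y where y: "y \<in> set P" "sublist [M ! k, M ! Suc k] (f y)"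
    using factL[OF PA, of k] lM ba b2 M_def by auto
  have "y \<in> alph w" using y(1) P_def by (auto simp: set_pref alph_def)
  then show ?thesis using y b1 b2 by (auto simp: Fact_def)
qed

end


theorem lemma4:
  fixes A :: "'a set" and w :: "nat \<Rightarrow> 'a" and f :: "'a \<Rightarrow> 'a list"
    and u :: "'a list" and a b c \<beta> \<gamma> :: 'a
  assumes "finite A"
    and "alph w \<subseteq> A"
    and "bLSP A f"
    and "fragility u a b c \<beta> \<gamma> (omorph f w)"
  shows "(u = [] \<longrightarrow>
            a = first A f \<and> [\<beta>, b] \<in> Fact (f ` alph w) \<and> [\<gamma>, c] \<in> Fact (f ` alph w))
       \<and> (u \<noteq> [] \<longrightarrow>
            (\<exists>a' b' c' v. a' \<in> alph w \<and> b' \<in> alph w \<and> c' \<in> alph w \<and>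
               fragility v a' b' c' \<beta> \<gamma> w \<and> length v < length u \<and>
               strict_prefix (morph f v) u \<and>
               prefix (u @ [a]) (morph f (v @ [a']) @ [first A f]) \<and>
               prefix (\<beta> # u @ [b]) (\<beta> # morph f (v @ [b']) @ [first A f]) \<and>
               prefix (\<gamma> # u @ [c]) (\<gamma> # morph f (v @ [c']) @ [first A f])))"
proof -
  obtain \<alpha> where aA: "\<alpha> \<in> A" and fa: "f \<alpha> = [\<alpha>]"
    and st: "\<forall>\<beta>\<in>A. \<beta> \<noteq> \<alpha> \<longrightarrow> (\<exists>\<gamma>\<in>A. f \<beta> = f \<gamma> @ [\<beta>])"
    using assms(3) unfolding bLSP_def by blast
  interpret blsp A f \<alpha> using aA fa st by unfold_locales blast+
  have fst: "first A f = \<alpha>" using first_eq[OF assms(3)] .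
  have wA: "\<forall>i. w i \<in> A" using assms(2) by (auto simp: alph_def)
  have fr: "a \<noteq> b" "a \<noteq> c" "b \<noteq> c" "\<beta> \<noteq> \<gamma>" "is_prefix_inf (u @ [a]) (omorph f w)"
    "is_factor_inf (\<beta> # u @ [b]) (omorph f w)" "is_factor_inf (\<gamma> # u @ [c]) (omorph f w)"
    using assms(4) unfolding fragility_def by auto
  have P1: "u = [] \<longrightarrow>
            a = first A f \<and> [\<beta>, b] \<in> Fact (f ` alph w) \<and> [\<gamma>, c] \<in> Fact (f ` alph w)"
  proof
    assume u: "u = []"
    have "a = omorph f w 0" using fr(5) u by (simp add: is_prefix_inf_def)
    also have "\<dots> = morph f (pref 1 w) ! 0"
      using W_nth[OF wA, of 0 1] lenM[OF wA, of 1] by (auto simp: Suc_le_eq)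
    also have "\<dots> = \<alpha>" using wA hd0 by (simp add: pref_def)
    finally have a: "a = \<alpha>" .
    have "[\<beta>, b] \<in> Fact (f ` alph w)" using H3[OF wA] fr(6) u a fr(1) by simp
    moreover have "[\<gamma>, c] \<in> Fact (f ` alph w)" using H3[OF wA] fr(7) u a fr(2) by simp
    ultimately show "a = first A f \<and> [\<beta>, b] \<in> Fact (f ` alph w) \<and> [\<gamma>, c] \<in> Fact (f ` alph w)"
      using a fst by simp
  qed
  have P2: "u \<noteq> [] \<longrightarrow>
            (\<exists>a' b' c' v. a' \<in> alph w \<and> b' \<in> alph w \<and> c' \<in> alph w \<and>
               fragility v a' b' c' \<beta> \<gamma> w \<and> length v < length u \<and>
               strict_prefix (morph f v) u \<and>
               prefix (u @ [a]) (morph f (v @ [a']) @ [first A f]) \<and>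
               prefix (\<beta> # u @ [b]) (\<beta> # morph f (v @ [b']) @ [first A f]) \<and>
               prefix (\<gamma> # u @ [c]) (\<gamma> # morph f (v @ [c']) @ [first A f]))"
  proof
    assume une: "u \<noteq> []"
    obtain v z a' where vz: "u = morph f v @ z" "z \<noteq> []" "prefix z (f a')" "a' \<in> range w"
      "set v \<subseteq> A" "is_prefix_inf (v@[a']) w"
      "(if length z < length (f a') then a = f a' ! length z else z = f a' \<and> a = \<alpha>)"
      using H1[OF wA fr(5) une] by (elim exE conjE) (rule that; assumption)
    have a'A: "a' \<in> A" using vz(4) wA by auto
    obtain b' where b': "b' \<in> range w" "is_factor_inf (\<beta>#v@[b']) w" "prefix z (f b')"
      "(if length z < length (f b') then b = f b' ! length z else z = f b' \<and> b = \<alpha>)"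
      using H2[OF wA fr(6) vz(1) vz(2) vz(3) a'A vz(5)] by (elim exE conjE) (rule that; assumption)
    obtain c' where c': "c' \<in> range w" "is_factor_inf (\<gamma>#v@[c']) w" "prefix z (f c')"
      "(if length z < length (f c') then c = f c' ! length z else z = f c' \<and> c = \<alpha>)"
      using H2[OF wA fr(7) vz(1) vz(2) vz(3) a'A vz(5)] by (elim exE conjE) (rule that; assumption)
    have d1: "a' \<noteq> b'"
    proof
      assume "a' = b'" then show False using vz(7) b'(4) fr(1) by (auto split: if_splits)
    qed
    have d2: "a' \<noteq> c'"
    proof
      assume "a' = c'" then show False using vz(7) c'(4) fr(2) by (auto split: if_splits)
    qed
    have d3: "b' \<noteq> c'"
    proof
      assume "b' = c'" then show False using b'(4) c'(4) fr(3) by (auto split: if_splits)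
    qed
    have frag: "fragility v a' b' c' \<beta> \<gamma> w"
      unfolding fragility_def using d1 d2 d3 fr(4) vz(6) b'(2) c'(2) by blast
    have len: "length v < length u"
    proof -
      have "0 < length z" using vz(2) by simp
      moreover have "length u = length (morph f v) + length z" using vz(1) by simp
      ultimately show ?thesis using len_morph[OF vz(5)] by linarith
    qed
    have sp: "strict_prefix (morph f v) u" using vz(1) vz(2) by (simp add: strict_prefix_def)
    have pa: "prefix (u @ [a]) (morph f (v @ [a']) @ [first A f])"
      using PP[OF vz(3) vz(7)] vz(1) fst by simp
    have pb: "prefix (\<beta> # u @ [b]) (\<beta> # morph f (v @ [b']) @ [first A f])"
      using PP[OF b'(3) b'(4)] vz(1) fst by simp
    have pc: "prefix (\<gamma> # u @ [c]) (\<gamma> # morph f (v @ [c']) @ [first A f])"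
      using PP[OF c'(3) c'(4)] vz(1) fst by simp
    have "a' \<in> alph w" "b' \<in> alph w" "c' \<in> alph w" using vz(4) b'(1) c'(1) by (auto simp: alph_def)
    then show "\<exists>a' b' c' v. a' \<in> alph w \<and> b' \<in> alph w \<and> c' \<in> alph w \<and>
               fragility v a' b' c' \<beta> \<gamma> w \<and> length v < length u \<and>
               strict_prefix (morph f v) u \<and>
               prefix (u @ [a]) (morph f (v @ [a']) @ [first A f]) \<and>
               prefix (\<beta> # u @ [b]) (\<beta> # morph f (v @ [b']) @ [first A f]) \<and>
               prefix (\<gamma> # u @ [c]) (\<gamma> # morph f (v @ [c']) @ [first A f])"
      using frag len sp pa pb pc by blast
  qed
  show ?thesis using P1 P2 by blast
qed

end
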